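(* Let $\mathcal{P}$ be a fixed hyper-prior, $\delta>0$, and $\lambda_1,\dots,\lambda_n>0$ fixed. Then with probability at least $1-\delta$ over the sampling of $S_1,\dots,S_n$, simultaneously for all hyper-posteriors $\mathcal{Q}$ and all posteriors $Q_1,\dots,Q_n$, $$-\sum_{i=1}^n m_i\log\Big(1-\mathcal{R}_i(Q_i)+\mathcal{R}_i(Q_i)\,e^{-\frac{\lambda_i}{n m_i}}\Big)\;\le\;\frac1n\sum_{i=1}^n\lambda_i\,\widehat{\mathcal{R}}_i(Q_i)+\mathrm{KL}(\mathfrak{Q}\|\mathfrak{P})+\log\frac1\delta.$$
   Context: Multi-task setting: $n$ tasks; task $i$ has an unknown distribution $D_i$ on $\mathcal{Z}$, a loss $\ell_i:\mathcal{F}\times\mathcal{Z}\to[0,1]$, and a training set $S_i=(z_{i1},\dots,z_{im_i})$ of $m_i\ge1$ i.i.d. samples from $D_i$, the $S_i$ mutually independent. $\mathcal{M}(\mathcal{F})$ is the set of probability distributions on $\mathcal{F}$. For $Q\in\mathcal{M}(\mathcal{F})$: $\ell_i(Q,z)=\mathbb{E}_{f\sim Q}\ell_i(f,z)$, $\mathcal{R}_i(Q)=\mathbb{E}_{z\sim D_i}\ell_i(Q,z)$, $\widehat{\mathcal{R}}_i(Q)=\frac1{m_i}\sum_{j=1}^{m_i}\ell_i(Q,z_{ij})$. Hyper-prior $\mathcal{P}$ (data-independent) and hyper-posterior $\mathcal{Q}$ are distributions on $\mathcal{M}(\mathcal{F})$; posteriors $Q_i\in\mathcal{M}(\mathcal{F})$;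 $\mathcal{Q},Q_i$ may depend on the data. $\mathfrak{Q}=\mathcal{Q}\times Q_1\times\cdots\times Q_n$ on $\mathcal{M}(\mathcal{F})\times\mathcal{F}^n$; $\mathfrak{P}$ on the same space is generated by $P\sim\mathcal{P}$, then $f_1,\dots,f_n$ i.i.d. $\sim P$. $\mathrm{KL}$ is the Kullback–Leibler divergence. *)

theory Defs
  imports "HOL-Probability.Probability"
begin

text \<open>Kullback--Leibler divergence KL(Q || P) with natural logarithm, valued in the
extended reals: it is +infinity unless Q is absolutely continuous w.r.t. P and the
log-density is Q-integrable (if Q << P the negative part of the log-density is always
Q-integrable, so non-integrability means the divergence is +infinity).
Note: the library's KL_divergence b M N denotes KL(N || M).\<close>
definition KL :: "'a measure \<Rightarrow> 'a measure \<Rightarrow> ereal" where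
  "KL Q P = (if sets Q = sets P \<and> absolutely_continuous P Q
                \<and> integrable Q (entropy_density (exp 1) P Q)
             then ereal (KL_divergence (exp 1) P Q) else \<infinity>)"

definition rloss :: "('f \<Rightarrow> 'z \<Rightarrow> real) \<Rightarrow> 'f measure \<Rightarrow> 'z \<Rightarrow> real" where
  "rloss l Q z = (\<integral>f. l f z \<partial>Q)"

definition risk :: "('f \<Rightarrow> 'z \<Rightarrow> real) \<Rightarrow> 'z measure \<Rightarrow> 'f measure \<Rightarrow> real" where
  "risk l D Q = (\<integral>z. rloss l Q z \<partial>D)"

definition emp_risk :: "('f \<Rightarrow> 'z \<Rightarrow> real) \<Rightarrow> nat \<Rightarrow> (nat \<Rightarrow> 'z) \<Rightarrow> 'f measure \<Rightarrow> real" where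
  "emp_risk l m s Q = (1 / real m) * (\<Sum>j<m. rloss l Q (s j))"

definition joint_post :: "nat \<Rightarrow> 'f measure measure \<Rightarrow> (nat \<Rightarrow> 'f measure) \<Rightarrow> 'f measure
     \<Rightarrow> ('f measure \<times> (nat \<Rightarrow> 'f)) measure" where
  "joint_post n HQ Qs F = HQ \<Otimes>\<^sub>M (\<Pi>\<^sub>M i\<in>{..<n}. Qs i)"

definition joint_prior :: "nat \<Rightarrow> 'f measure measure \<Rightarrow> 'f measure
     \<Rightarrow> ('f measure \<times> (nat \<Rightarrow> 'f)) measure" where
  "joint_prior n HP F = HP \<bind> (\<lambda>p. return (prob_algebra F) p \<Otimes>\<^sub>M (\<Pi>\<^sub>M i\<in>{..<n}. p))"

end

theory Submission
  imports Defs
begin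


lemma measurable_emeasure_prob_algebra':
  assumes "X \<in> sets F"
  shows "(\<lambda>a. emeasure a X) \<in> borel_measurable (prob_algebra F)"
  unfolding prob_algebra_def
  by (intro measurable_restrict_space1 measurable_emeasure_subprob_algebra assms)

lemma measurable_iid_PiM:
  assumes I: "finite I"
  shows "(\<lambda>p. PiM I (\<lambda>_. p)) \<in> prob_algebra F \<rightarrow>\<^sub>M prob_algebra (PiM I (\<lambda>_. F))"
proof (rule measurable_prob_algebra_generated[OF sets_PiM Int_stable_prod_algebra prod_algebra_sets_into_space])
  fix a assume "a \<in> space (prob_algebra F)"
  then have a: "sets a = sets F" "prob_space a" by (auto simp: space_prob_algebra)
  show "prob_space (PiM I (\<lambda>_. a))" using a by (intro prob_space_PiM) auto
  show "sets (PiM I (\<lambda>_. a)) = sets (PiM I (\<lambda>_. F))" using a by (intro sets_PiM_cong) auto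
next
  fix A assume "A \<in> prod_algebra I (\<lambda>_. F)"
  then obtain X where A: "A = PiE I X" "X \<in> (\<Pi> j\<in>I. sets F)"
    using \<open>A \<in> prod_algebra I (\<lambda>_. F)\<close> unfolding prod_algebra_eq_finite[OF I] by auto
  have "(\<lambda>a. emeasure (PiM I (\<lambda>_. a)) A) \<in> borel_measurable (prob_algebra F) \<longleftrightarrow>
     (\<lambda>a. \<Prod>i\<in>I. emeasure a (X i)) \<in> borel_measurable (prob_algebra F)"
  proof (rule measurable_cong)
    fix a assume "a \<in> space (prob_algebra F)"
    then have a: "sets a = sets F" "prob_space a" by (auto simp: space_prob_algebra)
    interpret product_sigma_finite "\<lambda>_. a" 
      using prob_space_imp_sigma_finite[OF a(2)] by (simp add: product_sigma_finite_def)
    show "emeasure (PiM I (\<lambda>_. a)) A = (\<Prod>i\<in>I. emeasure a (X i))"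
      using A a by (simp add: emeasure_PiM[OF I] Pi_iff)
  qed
  moreover have "(\<lambda>a. \<Prod>i\<in>I. emeasure a (X i)) \<in> borel_measurable (prob_algebra F)"
    using A by (intro borel_measurable_prod_ennreal measurable_emeasure_prob_algebra') auto
  ultimately show "(\<lambda>a. emeasure (PiM I (\<lambda>_. a)) A) \<in> borel_measurable (prob_algebra F)" by simp
qed



lemma exp_convex_bound:
  fixes c t :: real
  assumes "0 \<le> t" "t \<le> 1"
  shows "exp (- c * t) \<le> 1 - t + t * exp (- c)"
proof -
  have "exp ((1 - t) *\<^sub>R 0 + t *\<^sub>R (- c)) \<le> (1 - t) * exp 0 + t * exp (- c)"
    using convex_onD[OF exp_convex, of t 0 "- c"] assms by simp
  then show ?thesis by (simp add: algebra_simps)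
qed

lemma mgf_bound:
  fixes l :: "'z \<Rightarrow> real"
  assumes D: "prob_space D" and lm: "l \<in> borel_measurable D"
    and lr: "\<And>z. 0 \<le> l z \<and> l z \<le> 1"
  shows "(\<integral>\<^sup>+z. ennreal (exp (- c * l z)) \<partial>D) \<le> ennreal (1 - (\<integral>z. l z \<partial>D) + (\<integral>z. l z \<partial>D) * exp (- c))"
proof -
  interpret prob_space D by fact
  have int_l: "integrable D l"
    using lr lm by (intro integrable_const_bound[where B=1]) auto
  have "(\<integral>\<^sup>+z. ennreal (exp (- c * l z)) \<partial>D) \<le> (\<integral>\<^sup>+z. ennreal (1 - l z + l z * exp (- c)) \<partial>D)"
    using lr by (intro nn_integral_mono ennreal_leI exp_convex_bound) auto
  also have "\<dots> = ennreal (\<integral>z. (1 - l z + l z * exp (- c)) \<partial>D)"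
  proof (rule nn_integral_eq_integral)
    show "integrable D (\<lambda>z. 1 - l z + l z * exp (- c))"
      using int_l by auto
    show "AE z in D. 0 \<le> 1 - l z + l z * exp (- c)"
      using lr by (auto intro!: add_nonneg_nonneg)
  qed
  also have "(\<integral>z. (1 - l z + l z * exp (- c)) \<partial>D) = 1 - (\<integral>z. l z \<partial>D) + (\<integral>z. l z \<partial>D) * exp (- c)"
    using int_l by (simp add: prob_space)
  finally show ?thesis .
qed

lemma sample_bound:
  fixes l :: "'z \<Rightarrow> real"
  assumes D: "prob_space D" and lm: "l \<in> borel_measurable D"
    and lr: "\<And>z. 0 \<le> l z \<and> l z \<le> 1"
  shows "(\<integral>\<^sup>+s. ennreal (\<Prod>j<m. exp (- c * l (s j))) \<partial>PiM {..<m} (\<lambda>_. D))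
     \<le> ennreal ((1 - (\<integral>z. l z \<partial>D) + (\<integral>z. l z \<partial>D) * exp (- c)) ^ m)"
proof -
  interpret product_sigma_finite "\<lambda>_. D"
    using prob_space_imp_sigma_finite[OF D] by (simp add: product_sigma_finite_def)
  have "(\<integral>\<^sup>+s. ennreal (\<Prod>j<m. exp (- c * l (s j))) \<partial>PiM {..<m} (\<lambda>_. D))
      = (\<integral>\<^sup>+s. (\<Prod>j<m. ennreal (exp (- c * l (s j)))) \<partial>PiM {..<m} (\<lambda>_. D))"
    by (simp add: prod_ennreal)
  also have "\<dots> = (\<Prod>j<m. \<integral>\<^sup>+z. ennreal (exp (- c * l z)) \<partial>D)"
    using lm by (intro product_nn_integral_prod) auto
  also have "\<dots> \<le> (\<Prod>j<m. ennreal (1 - (\<integral>z. l z \<partial>D) + (\<integral>z. l z \<partial>D) * exp (- c)))"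
    unfolding prod_constant by (intro power_mono mgf_bound[OF D lm lr]) auto
  also have "\<dots> = ennreal ((1 - (\<integral>z. l z \<partial>D) + (\<integral>z. l z \<partial>D) * exp (- c)) ^ m)"
  proof -
    interpret prob_space D by fact
    have int_l: "integrable D l"
      using lr lm by (intro integrable_const_bound[where B=1]) auto
    have "(\<integral>z. l z \<partial>D) \<le> (\<integral>z. 1 \<partial>D)"
      using lr int_l by (intro integral_mono) auto
    then have "(\<integral>z. l z \<partial>D) \<le> 1" by (simp add: prob_space)
    then have "0 \<le> 1 - (\<integral>z. l z \<partial>D) + (\<integral>z. l z \<partial>D) * exp (- c)"
      using lr by (intro add_nonneg_nonneg integral_nonneg_AE) auto
    then show ?thesis by (simp add: ennreal_power)
  qed
  finally show ?thesis .
qed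



lemma dv_bound:
  fixes Q P :: "'a measure" and u :: "'a \<Rightarrow> real" and K B :: real
  assumes Q: "prob_space Q" and P: "prob_space P" and sQ: "sets Q = sets P"
    and ac: "absolutely_continuous P Q"
    and int: "integrable Q (entropy_density (exp 1) P Q)"
    and um: "u \<in> borel_measurable P" and ub: "\<And>x. x \<in> space P \<Longrightarrow> \<bar>u x\<bar> \<le> B"
    and W: "(\<integral>\<^sup>+x. ennreal (exp (u x)) \<partial>P) \<le> ennreal K" and K: "0 < K"
  shows "(\<integral>x. u x \<partial>Q) \<le> KL_divergence (exp 1) P Q + ln K"
proof -
  interpret Q: prob_space Q by fact
  interpret P: prob_space P by fact
  have spQ: "space Q = space P" using sQ by (rule sets_eq_imp_space_eq)
  define h where "h = RN_deriv P Q"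
  define r where "r x = enn2real (h x)" for x
  have hm[measurable]: "h \<in> borel_measurable P" unfolding h_def by simp
  have rm[measurable]: "r \<in> borel_measurable P" unfolding r_def by simp
  have Qd: "density P h = Q" unfolding h_def by (rule P.density_RN_deriv[OF ac sQ])
  have umQ[measurable]: "u \<in> borel_measurable Q" using um sQ by (simp cong: measurable_cong_sets)
  have rmQ[measurable]: "r \<in> borel_measurable Q" using rm sQ by (simp cong: measurable_cong_sets)
  have fin: "AE x in P. h x \<noteq> \<infinity>"
    unfolding h_def by (rule P.RN_deriv_finite[OF prob_space_imp_sigma_finite[OF Q] ac sQ])
  have finQ: "AE x in Q. h x \<noteq> \<infinity>"
    by (rule absolutely_continuous_AE[OF sQ ac fin])
  have posQ: "AE x in Q. 0 < h x"
    unfolding Qd[symmetric] using hm by (subst AE_density) auto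
  have rpos: "AE x in Q. 0 < r x"
    using finQ posQ by eventually_elim (auto simp: r_def enn2real_positive_iff less_top)
  have ent: "entropy_density (exp 1) P Q x = ln (r x)" for x
    by (simp add: entropy_density_def r_def h_def log_def)
  then have ent': "entropy_density (exp 1) P Q = (\<lambda>x. ln (r x))" by (rule ext)
  have KLd: "KL_divergence (exp 1) P Q = (\<integral>x. ln (r x) \<partial>Q)"
    by (simp add: KL_divergence_def ent')
  have intln: "integrable Q (\<lambda>x. ln (r x))"
    using int by (simp add: ent')
  define v where "v x = exp (u x) / r x" for x
  have vm[measurable]: "v \<in> borel_measurable Q" unfolding v_def by measurable
  have vmP[measurable]: "v \<in> borel_measurable P" unfolding v_def using um by measurable
  have "(\<integral>\<^sup>+x. ennreal (v x) \<partial>Q) = (\<integral>\<^sup>+x. h x * ennreal (v x) \<partial>P)"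
    unfolding Qd[symmetric] by (rule nn_integral_density) auto
  also have "\<dots> \<le> (\<integral>\<^sup>+x. ennreal (exp (u x)) \<partial>P)"
  proof (rule nn_integral_mono)
    fix x
    show "h x * ennreal (v x) \<le> ennreal (exp (u x))"
    proof (cases "h x" rule: ennreal_cases)
      case (real t)
      then show ?thesis
        by (cases "t = 0") (auto simp: v_def r_def ennreal_mult[symmetric] simp del: ennreal_mult')
    qed (simp add: v_def r_def)
  qed
  also have "\<dots> \<le> ennreal K" by (rule W)
  finally have vK: "(\<integral>\<^sup>+x. ennreal (v x) \<partial>Q) \<le> ennreal K" .
  have v0: "0 \<le> v x" for x unfolding v_def r_def by simp
  have intv: "integrable Q v"
    using vK v0 by (intro integrableI_nonneg) (auto simp: top_unique less_top[symmetric] dest: order.trans)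
  have intvK: "(\<integral>x. v x \<partial>Q) \<le> K"
    using vK v0 K by (subst integral_eq_nn_integral) (auto intro!: enn2real_leI)
  have intu: "integrable Q u"
    using ub spQ by (intro Q.integrable_const_bound[where B=B]) auto
  have "(\<integral>x. u x \<partial>Q) - (\<integral>x. ln (r x) \<partial>Q) = (\<integral>x. u x - ln (r x) \<partial>Q)"
    using intu intln by simp
  also have "\<dots> \<le> (\<integral>x. v x / K + ln K - 1 \<partial>Q)"
  proof (rule integral_mono_AE)
    show "integrable Q (\<lambda>x. u x - ln (r x))" using intu intln by simp
    show "integrable Q (\<lambda>x. v x / K + ln K - 1)" using intv by simp
    show "AE x in Q. u x - ln (r x) \<le> v x / K + ln K - 1"
      using rpos
    proof eventually_elim
      case (elim x)
      have p: "0 < exp (u x) / (r x * K)" using elim K by simp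
      have "ln (exp (u x) / (r x * K)) \<le> exp (u x) / (r x * K) - 1"
        by (rule ln_le_minus_one[OF p])
      moreover have "ln (exp (u x) / (r x * K)) = u x - ln (r x) - ln K"
        using elim K by (simp add: ln_div ln_mult)
      moreover have "exp (u x) / (r x * K) = v x / K"
        by (simp add: v_def)
      ultimately show ?case by simp
    qed
  qed
  also have "\<dots> = (\<integral>x. v x \<partial>Q) / K + ln K - 1"
    using intv by (simp add: Q.prob_space)
  also have "\<dots> \<le> ln K"
    using intvK K by (simp add: field_simps)
  finally show ?thesis using KLd by simp
qed



lemma y_pos:
  fixes r k :: real
  assumes "0 \<le> r" "r \<le> 1" "0 < k"
  shows "0 < 1 - r + r * k"
proof (cases "r = 1")
  case False then show ?thesis using assms by (intro add_pos_nonneg) auto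
qed (use assms in simp)

lemma phi_tangent:
  fixes r r0 k M :: real
  assumes "0 \<le> r" "r \<le> 1" "0 \<le> r0" "r0 \<le> 1" "0 < k" "0 \<le> M"
  shows "- (M * ln (1 - r0 + r0 * k)) + M * (1 - k) / (1 - r0 + r0 * k) * (r - r0)
          \<le> - (M * ln (1 - r + r * k))"
proof -
  define y where "y = 1 - r + r * k"
  define y0 where "y0 = 1 - r0 + r0 * k"
  have y: "0 < y" "0 < y0" unfolding y_def y0_def using assms by (auto intro!: y_pos)
  have "ln (y / y0) \<le> y / y0 - 1" using y by (intro ln_le_minus_one) auto
  then have "ln y - ln y0 \<le> (y - y0) / y0" using y by (simp add: ln_div field_simps)
  also have "y - y0 = - ((1 - k) * (r - r0))" unfolding y_def y0_def
    by (simp add: algebra_simps)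
  then have "(y - y0) / y0 = - ((1 - k) / y0 * (r - r0))" by simp
  finally have "ln y - ln y0 \<le> - ((1 - k) / y0 * (r - r0))" .
  then have "M * (ln y - ln y0) \<le> M * (- ((1 - k) / y0 * (r - r0)))"
    using assms by (intro mult_left_mono) auto
  then show ?thesis unfolding y_def[symmetric] y0_def[symmetric] by (simp add: algebra_simps)
qed

lemma jensen_phi:
  fixes g :: "'a \<Rightarrow> real"
  assumes Q: "prob_space Q" and gm: "g \<in> borel_measurable Q" and gr: "\<And>x. 0 \<le> g x \<and> g x \<le> 1"
    and k: "0 < k" and k1: "k \<le> 1" and M: "0 \<le> M"
  shows "- (M * ln (1 - (\<integral>x. g x \<partial>Q) + (\<integral>x. g x \<partial>Q) * k))
     \<le> (\<integral>x. - (M * ln (1 - g x + g x * k)) \<partial>Q)"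
proof -
  interpret prob_space Q by fact
  have intg: "integrable Q g"
    using gr gm by (intro integrable_const_bound[where B=1]) auto
  define r0 where "r0 = (\<integral>x. g x \<partial>Q)"
  have "r0 \<le> (\<integral>x. 1 \<partial>Q)"
    unfolding r0_def using gr intg by (intro integral_mono) auto
  then have r01: "0 \<le> r0" "r0 \<le> 1" unfolding r0_def using gr by (auto simp: prob_space intro!: integral_nonneg_AE)
  define s where "s = M * (1 - k) / (1 - r0 + r0 * k)"
  have "- (M * ln (1 - r0 + r0 * k)) = (\<integral>x. - (M * ln (1 - r0 + r0 * k)) + s * (g x - r0) \<partial>Q)"
    using intg by (simp add: prob_space r0_def)
  also have "\<dots> \<le> (\<integral>x. - (M * ln (1 - g x + g x * k)) \<partial>Q)"
  proof (rule integral_mono)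
    show "integrable Q (\<lambda>x. - (M * ln (1 - r0 + r0 * k)) + s * (g x - r0))" using intg by simp
    have "(\<lambda>x. - (M * ln (1 - g x + g x * k))) \<in> borel_measurable Q" using gm by measurable
    moreover have "\<bar>- (M * ln (1 - g x + g x * k))\<bar> \<le> M * \<bar>ln k\<bar>" for x
    proof -
      have e1: "1 - g x + g x * k = k + (1 - g x) * (1 - k)"
        by (simp add: algebra_simps)
      have e2: "1 - g x + g x * k = 1 - g x * (1 - k)"
        by (simp add: algebra_simps)
      have p1: "0 \<le> (1 - g x) * (1 - k)" using gr[of x] k1 by auto
      have p2: "0 \<le> g x * (1 - k)" using gr[of x] k1 by auto
      have b1: "k \<le> 1 - g x + g x * k" using e1 p1 by linarith
      have b2: "1 - g x + g x * k \<le> 1" using e2 p2 by linarith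
      from b1 b2 have "ln k \<le> ln (1 - g x + g x * k)" "ln (1 - g x + g x * k) \<le> 0" using k by auto
      moreover have "ln k \<le> 0" using k k1 by auto
      ultimately have "\<bar>ln (1 - g x + g x * k)\<bar> \<le> \<bar>ln k\<bar>" by linarith
      then show ?thesis using M by (simp add: abs_mult mult_left_mono)
    qed
    ultimately show "integrable Q (\<lambda>x. - (M * ln (1 - g x + g x * k)))"
      by (intro integrable_const_bound[where B="M * \<bar>ln k\<bar>"]) auto
    show "- (M * ln (1 - r0 + r0 * k)) + s * (g x - r0) \<le> - (M * ln (1 - g x + g x * k))" for x
      unfolding s_def using gr[of x] r01 k M by (intro phi_tangent) auto
  qed
  finally show ?thesis unfolding r0_def .
qed


lemma phi_bound:
  fixes r k M :: real
  assumes r: "0 \<le> r" "r \<le> 1" and k: "0 < k" "k \<le> 1" and M: "0 \<le> M"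
  shows "\<bar>- (M * ln (1 - r + r * k))\<bar> \<le> M * \<bar>ln k\<bar>"
proof -
  have e1: "1 - r + r * k = k + (1 - r) * (1 - k)"
    by (simp add: algebra_simps)
  have e2: "1 - r + r * k = 1 - r * (1 - k)"
    by (simp add: algebra_simps)
  have p1: "0 \<le> (1 - r) * (1 - k)" using r k by auto
  have p2: "0 \<le> r * (1 - k)" using r k by auto
  have b1: "k \<le> 1 - r + r * k" using e1 p1 by linarith
  have b2: "1 - r + r * k \<le> 1" using e2 p2 by linarith
  from b1 b2 have "ln k \<le> ln (1 - r + r * k)" "ln (1 - r + r * k) \<le> 0" using k by auto
  moreover have "ln k \<le> 0" using k by auto
  ultimately have "\<bar>ln (1 - r + r * k)\<bar> \<le> \<bar>ln k\<bar>" by linarith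
  then show ?thesis using M by (simp add: abs_mult mult_left_mono)
qed

lemma ennreal_prod_le_1:
  fixes f :: "'a \<Rightarrow> ennreal"
  shows "(\<And>i. i \<in> A \<Longrightarrow> f i \<le> 1) \<Longrightarrow> prod f A \<le> 1"
proof (induct A rule: infinite_finite_induct)
  case (insert x F)
  then have "f x * prod f F \<le> 1 * 1" by (intro mult_mono) auto
  then show ?case using insert by simp
qed auto

lemma marginal_integrable:
  fixes g :: "'f \<Rightarrow> real"
  assumes HQ: "prob_space HQ" and Qs: "\<And>i. i < n \<Longrightarrow> prob_space (Qs i)" and i: "i < n"
    and gm: "g \<in> borel_measurable (Qs i)" and gb: "\<And>x. \<bar>g x\<bar> \<le> B"
  shows "integrable (HQ \<Otimes>\<^sub>M PiM {..<n} Qs) (\<lambda>\<omega>. g (snd \<omega> i))"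
proof -
  have PQ: "prob_space (PiM {..<n} Qs)" using Qs by (intro prob_space_PiM) auto
  interpret pair_prob_space HQ "PiM {..<n} Qs"
    using HQ PQ by (simp add: pair_prob_space_def pair_sigma_finite_def prob_space_imp_sigma_finite)
  have comp: "(\<lambda>y. y i) \<in> PiM {..<n} Qs \<rightarrow>\<^sub>M Qs i" using i by (intro measurable_component_singleton) auto
  have mP: "(\<lambda>y. g (y i)) \<in> borel_measurable (PiM {..<n} Qs)"
    using measurable_comp[OF comp gm] by (simp add: comp_def)
  have m: "(\<lambda>\<omega>. g (snd \<omega> i)) \<in> borel_measurable (HQ \<Otimes>\<^sub>M PiM {..<n} Qs)"
    using measurable_comp[OF measurable_snd mP] by (simp add: comp_def)
  show ?thesis
    using m gb by (intro P.integrable_const_bound[where B=B]) auto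
qed

lemma marginal_integral:
  fixes g :: "'f \<Rightarrow> real"
  assumes HQ: "prob_space HQ" and Qs: "\<And>i. i < n \<Longrightarrow> prob_space (Qs i)" and i: "i < n"
    and gm: "g \<in> borel_measurable (Qs i)" and gb: "\<And>x. \<bar>g x\<bar> \<le> B"
  shows "(\<integral>\<omega>. g (snd \<omega> i) \<partial>(HQ \<Otimes>\<^sub>M PiM {..<n} Qs)) = (\<integral>f. g f \<partial>Qs i)"
proof -
  have PQ: "prob_space (PiM {..<n} Qs)" using Qs by (intro prob_space_PiM) auto
  interpret pair_prob_space HQ "PiM {..<n} Qs"
    using HQ PQ by (simp add: pair_prob_space_def pair_sigma_finite_def prob_space_imp_sigma_finite)
  have comp: "(\<lambda>y. y i) \<in> PiM {..<n} Qs \<rightarrow>\<^sub>M Qs i" using i by (intro measurable_component_singleton) auto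
  have mP: "(\<lambda>y. g (y i)) \<in> borel_measurable (PiM {..<n} Qs)"
    using measurable_comp[OF comp gm] by (simp add: comp_def)
  have m: "(\<lambda>\<omega>. g (snd \<omega> i)) \<in> borel_measurable (HQ \<Otimes>\<^sub>M PiM {..<n} Qs)"
    using measurable_comp[OF measurable_snd mP] by (simp add: comp_def)
  have int: "integrable (HQ \<Otimes>\<^sub>M PiM {..<n} Qs) (\<lambda>\<omega>. g (snd \<omega> i))"
    using m gb by (intro P.integrable_const_bound[where B=B]) auto
  have "(\<integral>\<omega>. g (snd \<omega> i) \<partial>(HQ \<Otimes>\<^sub>M PiM {..<n} Qs)) = (\<integral>x. (\<integral>y. g (y i) \<partial>PiM {..<n} Qs) \<partial>HQ)"
    using integral_fst'[OF int] by simp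
  also have "\<dots> = (\<integral>y. g (y i) \<partial>PiM {..<n} Qs)"
    by (simp add: M1.prob_space)
  also have "\<dots> = (\<integral>f. g f \<partial>distr (PiM {..<n} Qs) (Qs i) (\<lambda>y. y i))"
    using comp gm by (simp add: integral_distr)
  also have "distr (PiM {..<n} Qs) (Qs i) (\<lambda>y. y i) = Qs i"
    using Qs i by (intro distr_PiM_component) auto
  finally show ?thesis .
qed

lemma risk_fubini:
  fixes l :: "'f \<Rightarrow> 'z \<Rightarrow> real"
  assumes Q: "prob_space Q" and D: "prob_space D"
    and lm: "(\<lambda>(f, z). l f z) \<in> borel_measurable (Q \<Otimes>\<^sub>M D)" and lr: "\<And>f z. 0 \<le> l f z \<and> l f z \<le> 1"
  shows "risk l D Q = (\<integral>f. (\<integral>z. l f z \<partial>D) \<partial>Q)"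
proof -
  interpret pair_prob_space Q D
    using Q D by (simp add: pair_prob_space_def pair_sigma_finite_def prob_space_imp_sigma_finite)
  have int: "integrable (Q \<Otimes>\<^sub>M D) (\<lambda>(f, z). l f z)"
    using lm lr by (intro P.integrable_const_bound[where B=1]) auto
  show ?thesis unfolding risk_def rloss_def by (rule Fubini_integral[OF int])
qed

lemma joint_prior_facts:
  assumes HP: "HP \<in> space (prob_algebra (prob_algebra F))"
  shows "prob_space (joint_prior n HP F)"
    and "sets (joint_prior n HP F) = sets (prob_algebra F \<Otimes>\<^sub>M PiM {..<n} (\<lambda>_. F))"
proof -
  have K: "(\<lambda>p. return (prob_algebra F) p \<Otimes>\<^sub>M (\<Pi>\<^sub>M i\<in>{..<n}. p)) \<in>
     prob_algebra F \<rightarrow>\<^sub>M prob_algebra (prob_algebra F \<Otimes>\<^sub>M PiM {..<n} (\<lambda>_. F))"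
    by (intro measurable_pair_prob measurable_return_prob_space measurable_iid_PiM) auto
  show "prob_space (joint_prior n HP F)" unfolding joint_prior_def by (rule prob_space_bind'[OF HP K])
  show "sets (joint_prior n HP F) = sets (prob_algebra F \<Otimes>\<^sub>M PiM {..<n} (\<lambda>_. F))"
    unfolding joint_prior_def by (rule sets_bind'[OF HP K])
qed

lemma joint_post_facts:
  assumes HQ: "HQ \<in> space (prob_algebra (prob_algebra F))"
    and Qs: "\<forall>i<n. Qs i \<in> space (prob_algebra F)"
  shows "prob_space (joint_post n HQ Qs F)"
    and "sets (joint_post n HQ Qs F) = sets (prob_algebra F \<Otimes>\<^sub>M PiM {..<n} (\<lambda>_. F))"
proof -
  have HQ': "prob_space HQ" "sets HQ = sets (prob_algebra F)" using HQ by (auto simp: space_prob_algebra)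
  have Qs': "prob_space (Qs i)" "sets (Qs i) = sets F" if "i < n" for i
    using Qs that by (auto simp: space_prob_algebra)
  show "prob_space (joint_post n HQ Qs F)" unfolding joint_post_def
    using HQ' Qs' by (intro prob_space_pair prob_space_PiM) auto
  show "sets (joint_post n HQ Qs F) = sets (prob_algebra F \<Otimes>\<^sub>M PiM {..<n} (\<lambda>_. F))"
    unfolding joint_post_def using HQ' Qs' by (intro sets_pair_measure_cong sets_PiM_cong) auto
qed


theorem theorem4:
  fixes n :: nat and m :: "nat \<Rightarrow> nat"
    and F :: "'f measure" and Z :: "'z measure"
    and D :: "nat \<Rightarrow> 'z measure"
    and l :: "nat \<Rightarrow> 'f \<Rightarrow> 'z \<Rightarrow> real"
    and HP :: "'f measure measure"
    and \<delta> :: real and lam :: "nat \<Rightarrow> real"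
  assumes n_pos: "0 < n"
    and m_pos: "\<And>i. i < n \<Longrightarrow> 1 \<le> m i"
    and D_prob: "\<And>i. i < n \<Longrightarrow> prob_space (D i)"
    and D_sets: "\<And>i. i < n \<Longrightarrow> sets (D i) = sets Z"
    and l_meas: "\<And>i. i < n \<Longrightarrow> (\<lambda>(f, z). l i f z) \<in> borel_measurable (F \<Otimes>\<^sub>M Z)"
    and l_range: "\<And>i f z. i < n \<Longrightarrow> 0 \<le> l i f z \<and> l i f z \<le> 1"
    and HP_prob: "HP \<in> space (prob_algebra (prob_algebra F))"
    and delta_pos: "0 < \<delta>"
    and lam_pos: "\<And>i. i < n \<Longrightarrow> 0 < lam i"
  shows "\<exists>A \<in> sets (\<Pi>\<^sub>M i\<in>{..<n}. \<Pi>\<^sub>M j\<in>{..<m i}. D i).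
           measure (\<Pi>\<^sub>M i\<in>{..<n}. \<Pi>\<^sub>M j\<in>{..<m i}. D i) A \<ge> 1 - \<delta> \<and>
           (\<forall>S\<in>A. \<forall>HQ \<in> space (prob_algebra (prob_algebra F)).
              \<forall>Qs. (\<forall>i<n. Qs i \<in> space (prob_algebra F)) \<longrightarrow>
                ereal (- (\<Sum>i<n. real (m i) *
                    ln (1 - risk (l i) (D i) (Qs i)
                        + risk (l i) (D i) (Qs i) * exp (- lam i / (real n * real (m i)))))) \<le>
                ereal ((1 / real n) * (\<Sum>i<n. lam i * emp_risk (l i) (m i) (S i) (Qs i)))
                + KL (joint_post n HQ Qs F) (joint_prior n HP F)
                + ereal (ln (1 / \<delta>)))"
proof -
  define SS where "SS = (\<Pi>\<^sub>M i\<in>{..<n}. \<Pi>\<^sub>M j\<in>{..<m i}. D i)"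
  define P where "P = joint_prior n HP F"
  define M0 where "M0 = prob_algebra F \<Otimes>\<^sub>M PiM {..<n} (\<lambda>_. F)"
  define c where "c i = lam i / (real n * real (m i))" for i
  define Rf where "Rf i f = (\<integral>z. l i f z \<partial>D i)" for i f
  define Phi where "Phi i r = - (real (m i) * ln (1 - r + r * exp (- c i)))" for i r
  define G where "G fs S = (\<Sum>i<n. Phi i (Rf i (fs i)) - c i * (\<Sum>j<m i. l i (fs i) (S i j)))" for fs S
  define W where "W S = (\<integral>\<^sup>+\<omega>. ennreal (exp (G (snd \<omega>) S)) \<partial>P)" for S

  have c_pos: "0 < c i" if "i < n" for i
    using lam_pos[OF that] m_pos[OF that] n_pos unfolding c_def by auto
  have P_prob: "prob_space P" and P_sets: "sets P = sets M0"
    using joint_prior_facts[OF HP_prob, of n] unfolding P_def M0_def by auto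
  have P_space: "space P = space M0" using P_sets by (rule sets_eq_imp_space_eq)
  have SS_prob: "prob_space SS"
    unfolding SS_def using D_prob by (intro prob_space_PiM) auto
  interpret P: prob_space P by (rule P_prob)
  interpret SS: prob_space SS by (rule SS_prob)
  interpret PS: pair_sigma_finite P SS
    by (simp add: pair_sigma_finite_def prob_space_imp_sigma_finite P_prob SS_prob)

  have lF: "(\<lambda>z. l i f z) \<in> borel_measurable (D i)" if "i < n" "f \<in> space F" for i f
  proof -
    have "(\<lambda>z. (\<lambda>(f, z). l i f z) (f, z)) \<in> borel_measurable Z"
      using measurable_comp[OF measurable_Pair1'[OF that(2), of Z] l_meas[OF that(1)]]
      by (simp add: comp_def)
    then show ?thesis using D_sets[OF that(1)] by (simp cong: measurable_cong_sets)
  qed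
  have lZ: "(\<lambda>f. l i f z) \<in> borel_measurable F" if "i < n" "z \<in> space Z" for i z
  proof -
    have "(\<lambda>f. (\<lambda>(f, z). l i f z) (f, z)) \<in> borel_measurable F"
      using measurable_comp[OF measurable_Pair2'[OF that(2), of F] l_meas[OF that(1)]]
      by (simp add: comp_def)
    then show ?thesis by simp
  qed
  have Rf_meas: "Rf i \<in> borel_measurable F" if "i < n" for i
  proof -
    interpret Di: prob_space "D i" by (rule D_prob[OF that])
    have "(\<lambda>(f, z). l i f z) \<in> borel_measurable (F \<Otimes>\<^sub>M D i)"
    proof -
      have "sets (F \<Otimes>\<^sub>M D i) = sets (F \<Otimes>\<^sub>M Z)"
        using D_sets[OF that] by (intro sets_pair_measure_cong) auto
      then show ?thesis using l_meas[OF that] by (simp cong: measurable_cong_sets)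
    qed
    then show ?thesis unfolding Rf_def[abs_def]
      by (rule Di.borel_measurable_lebesgue_integral)
  qed
  have Rf_range: "0 \<le> Rf i f \<and> Rf i f \<le> 1" if "i < n" for i f
  proof (cases "integrable (D i) (\<lambda>z. l i f z)")
    case int: True
    interpret Di: prob_space "D i" by (rule D_prob[OF that(1)])
    have "Rf i f \<le> (\<integral>z. 1 \<partial>D i)"
      unfolding Rf_def using int l_range[OF that(1)] by (intro integral_mono) auto
    then show ?thesis unfolding Rf_def using l_range[OF that(1)]
      by (auto simp: Di.prob_space intro!: integral_nonneg_AE)
  next
    case False
    then show ?thesis unfolding Rf_def by (simp add: not_integrable_integral_eq)
  qed
  have Phi_bound: "\<bar>Phi i r\<bar> \<le> real (m i) * c i" if "i < n" "0 \<le> r" "r \<le> 1" for i r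
    using phi_bound[OF that(2,3), of "exp (- c i)" "real (m i)"] c_pos[OF that(1)]
    unfolding Phi_def by simp
  have lsum_bound: "\<bar>c i * (\<Sum>j<m i. l i f (s j))\<bar> \<le> real (m i) * c i" if "i < n" for i f s
  proof -
    have "0 \<le> (\<Sum>j<m i. l i f (s j))" using l_range[OF that] by (intro sum_nonneg) auto
    moreover have "(\<Sum>j<m i. l i f (s j)) \<le> (\<Sum>j<m i. 1)" using l_range[OF that] by (intro sum_mono) auto
    ultimately show ?thesis using c_pos[OF that] by (simp add: abs_mult)
  qed
  define Bd where "Bd = (\<Sum>i<n. 2 * (real (m i) * c i))"
  have G_bound: "\<bar>G fs S\<bar> \<le> Bd" if "fs \<in> (\<Pi>\<^sub>E i\<in>{..<n}. space F)" for fs S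
  proof -
    have "\<bar>G fs S\<bar> \<le> (\<Sum>i<n. \<bar>Phi i (Rf i (fs i)) - c i * (\<Sum>j<m i. l i (fs i) (S i j))\<bar>)"
      unfolding G_def by (rule sum_abs)
    also have "\<dots> \<le> Bd" unfolding Bd_def
    proof (intro sum_mono)
      fix i assume i: "i \<in> {..<n}"
      then have fi: "fs i \<in> space F" using that by auto
      have "\<bar>Phi i (Rf i (fs i)) - c i * (\<Sum>j<m i. l i (fs i) (S i j))\<bar>
          \<le> \<bar>Phi i (Rf i (fs i))\<bar> + \<bar>c i * (\<Sum>j<m i. l i (fs i) (S i j))\<bar>" by (rule abs_triangle_ineq4)
      also have "\<dots> \<le> real (m i) * c i + real (m i) * c i"
        using Phi_bound[of i "Rf i (fs i)"] Rf_range[of i "fs i"] lsum_bound[of i "fs i" "S i"] i fi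
        by (intro add_mono) auto
      finally show "\<bar>Phi i (Rf i (fs i)) - c i * (\<Sum>j<m i. l i (fs i) (S i j))\<bar> \<le> 2 * (real (m i) * c i)"
        by (simp add: mult.commute)
    qed
    finally show ?thesis .
  qed

  have G_meas: "(\<lambda>x. G (snd (fst x)) (snd x)) \<in> borel_measurable (M0 \<Otimes>\<^sub>M SS)"
  proof -
    have comp1: "(\<lambda>x. snd (fst x) i) \<in> M0 \<Otimes>\<^sub>M SS \<rightarrow>\<^sub>M F" if "i < n" for i
    proof -
      have "(\<lambda>y. y i) \<in> PiM {..<n} (\<lambda>_. F) \<rightarrow>\<^sub>M F" using that by (intro measurable_component_singleton) auto
      then have "(\<lambda>x. snd x i) \<in> M0 \<rightarrow>\<^sub>M F" unfolding M0_def by (intro measurable_compose[OF measurable_snd])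
      then show ?thesis by (intro measurable_compose[OF measurable_fst])
    qed
    have comp2: "(\<lambda>x. snd x i j) \<in> M0 \<Otimes>\<^sub>M SS \<rightarrow>\<^sub>M Z" if "i < n" "j < m i" for i j
    proof -
      have "(\<lambda>x. snd x i j) \<in> M0 \<Otimes>\<^sub>M SS \<rightarrow>\<^sub>M D i"
      proof -
        have "(\<lambda>y. y i) \<in> SS \<rightarrow>\<^sub>M PiM {..<m i} (\<lambda>j. D i)" unfolding SS_def using that by (intro measurable_component_singleton) auto
        moreover have "(\<lambda>y. y j) \<in> PiM {..<m i} (\<lambda>j. D i) \<rightarrow>\<^sub>M D i" using that by (intro measurable_component_singleton) auto
        ultimately have "(\<lambda>y. y i j) \<in> SS \<rightarrow>\<^sub>M D i" by (rule measurable_compose)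
        then show ?thesis by (intro measurable_compose[OF measurable_snd])
      qed
      then show ?thesis using D_sets[OF that(1)] by (simp cong: measurable_cong_sets)
    qed
    have t1: "(\<lambda>x. Phi i (Rf i (snd (fst x) i))) \<in> borel_measurable (M0 \<Otimes>\<^sub>M SS)" if "i < n" for i
      unfolding Phi_def using measurable_comp[OF comp1[OF that] Rf_meas[OF that]]
      by (simp add: comp_def)
    have t2: "(\<lambda>x. l i (snd (fst x) i) (snd x i j)) \<in> borel_measurable (M0 \<Otimes>\<^sub>M SS)"
      if "i < n" "j < m i" for i j
    proof -
      have "(\<lambda>x. (snd (fst x) i, snd x i j)) \<in> M0 \<Otimes>\<^sub>M SS \<rightarrow>\<^sub>M F \<Otimes>\<^sub>M Z"
        using comp1[OF that(1)] comp2[OF that] by (rule measurable_Pair)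
      from measurable_comp[OF this l_meas[OF that(1)]] show ?thesis by (simp add: comp_def)
    qed
    show ?thesis unfolding G_def
      using t1 t2 by (intro borel_measurable_sum borel_measurable_diff borel_measurable_times
          borel_measurable_const) auto
  qed

  define D' where "D' i = (if i < n then D i else return (count_space UNIV) undefined)" for i
  have D'_prob: "prob_space (D' i)" for i
    using D_prob by (auto simp: D'_def prob_space_return)
  define M' where "M' i = PiM {..<m i} (\<lambda>j. D' i)" for i
  have SS_eq: "SS = PiM {..<n} M'"
    unfolding SS_def M'_def by (rule PiM_cong) (auto simp: D'_def intro!: PiM_cong)
  interpret M': product_sigma_finite M'
    unfolding product_sigma_finite_def M'_def using D'_prob
    by (auto intro!: prob_space_imp_sigma_finite prob_space_PiM)

  have stepA: "(\<integral>\<^sup>+S. ennreal (exp (G fs S)) \<partial>SS) \<le> 1" if fs: "fs \<in> (\<Pi>\<^sub>E i\<in>{..<n}. space F)" for fs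
  proof -
    define e where "e i s = exp (Phi i (Rf i (fs i))) * (\<Prod>j<m i. exp (- c i * l i (fs i) (s j)))" for i s
    have e_eq: "exp (G fs S) = (\<Prod>i<n. e i (S i))" for S
    proof -
      have "exp (Phi i (Rf i (fs i)) - c i * (\<Sum>j<m i. l i (fs i) (S i j))) = e i (S i)" for i
      proof -
        have "Phi i (Rf i (fs i)) - c i * (\<Sum>j<m i. l i (fs i) (S i j))
            = Phi i (Rf i (fs i)) + (\<Sum>j<m i. - c i * l i (fs i) (S i j))"
          by (simp add: sum_distrib_left sum_negf)
        then show ?thesis unfolding e_def by (simp only: exp_add exp_sum[OF finite_lessThan])
      qed
      then show ?thesis unfolding G_def by (simp add: exp_sum)
    qed
    have e_nn: "0 \<le> e i s" for i s unfolding e_def by (intro mult_nonneg_nonneg prod_nonneg) auto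
    have lD': "(\<lambda>z. l i (fs i) z) \<in> borel_measurable (D' i)" if "i < n" for i
    proof -
      have fi: "fs i \<in> space F" using fs that by auto
      show ?thesis using lF[OF that fi] that by (simp add: D'_def)
    qed
    have e_meas: "(\<lambda>s. ennreal (e i s)) \<in> borel_measurable (M' i)" if "i < n" for i
    proof -
      have "(\<lambda>s. l i (fs i) (s j)) \<in> borel_measurable (M' i)" if "j < m i" for j
        proof -
        have "(\<lambda>s. s j) \<in> M' i \<rightarrow>\<^sub>M D' i" unfolding M'_def using that by (intro measurable_component_singleton) auto
        then show ?thesis by (rule measurable_compose) (rule lD'[OF \<open>i < n\<close>])
      qed
      then have "(\<lambda>s. exp (- c i * l i (fs i) (s j))) \<in> borel_measurable (M' i)" if "j < m i" for j
        using that by (intro measurable_compose[OF _ borel_measurable_exp] borel_measurable_times borel_measurable_const) auto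
      then have "e i \<in> borel_measurable (M' i)"
        unfolding e_def[abs_def] by (intro borel_measurable_times borel_measurable_const borel_measurable_prod) auto
      then show ?thesis by (intro measurable_compose[OF _ measurable_ennreal])
    qed
    have "(\<integral>\<^sup>+S. ennreal (exp (G fs S)) \<partial>SS) = (\<integral>\<^sup>+S. (\<Prod>i<n. ennreal (e i (S i))) \<partial>PiM {..<n} M')"
      unfolding SS_eq e_eq using e_nn by (simp add: prod_ennreal)
    also have "\<dots> = (\<Prod>i<n. \<integral>\<^sup>+s. ennreal (e i s) \<partial>M' i)"
      using e_meas by (intro M'.product_nn_integral_prod) auto
    also have "\<dots> \<le> 1"
    proof (intro ennreal_prod_le_1)
      fix i assume "i \<in> {..<n}" then have i: "i < n" by simp
      define y where "y = 1 - Rf i (fs i) + Rf i (fs i) * exp (- c i)"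
      have ypos: "0 < y" unfolding y_def using y_pos Rf_range[OF i, of "fs i"] by auto
      have Rf': "Rf i (fs i) = (\<integral>z. l i (fs i) z \<partial>D' i)" using i by (simp add: Rf_def D'_def)
      have pm: "(\<lambda>s. ennreal (\<Prod>j<m i. exp (- c i * l i (fs i) (s j)))) \<in> borel_measurable (M' i)"
      proof -
        have "(\<lambda>s. l i (fs i) (s j)) \<in> borel_measurable (M' i)" if "j < m i" for j
          proof -
        have "(\<lambda>s. s j) \<in> M' i \<rightarrow>\<^sub>M D' i" unfolding M'_def using that by (intro measurable_component_singleton) auto
        then show ?thesis by (rule measurable_compose) (rule lD'[OF i])
      qed
        then have "(\<lambda>s. exp (- c i * l i (fs i) (s j))) \<in> borel_measurable (M' i)" if "j < m i" for j
          using that by (intro measurable_compose[OF _ borel_measurable_exp] borel_measurable_times borel_measurable_const) auto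
        then show ?thesis by (intro measurable_compose[OF _ measurable_ennreal] borel_measurable_prod) auto
      qed
      have "(\<integral>\<^sup>+s. ennreal (e i s) \<partial>M' i) = (\<integral>\<^sup>+s. ennreal (exp (Phi i (Rf i (fs i)))) * ennreal (\<Prod>j<m i. exp (- c i * l i (fs i) (s j))) \<partial>M' i)"
        unfolding e_def by (intro nn_integral_cong) (simp add: ennreal_mult prod_nonneg)
      also have "\<dots> = ennreal (exp (Phi i (Rf i (fs i)))) * (\<integral>\<^sup>+s. ennreal (\<Prod>j<m i. exp (- c i * l i (fs i) (s j))) \<partial>M' i)"
        using pm by (rule nn_integral_cmult)
      also have "\<dots> \<le> ennreal (exp (Phi i (Rf i (fs i)))) * ennreal (y ^ m i)"
        unfolding M'_def y_def Rf'
        by (intro mult_left_mono sample_bound D'_prob lD'[OF i]) (use l_range[OF i] in auto)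
      also have "\<dots> = ennreal (exp (Phi i (Rf i (fs i))) * y ^ m i)"
        using ypos by (simp add: ennreal_mult)
      also have "exp (Phi i (Rf i (fs i))) * y ^ m i = 1"
      proof -
        have "Phi i (Rf i (fs i)) = - (real (m i) * ln y)" unfolding Phi_def y_def ..
        then have "exp (Phi i (Rf i (fs i))) = inverse (exp (ln y) ^ m i)"
          by (simp add: exp_minus exp_of_nat_mult)
        then show ?thesis using ypos by simp
      qed
      finally show "(\<integral>\<^sup>+s. ennreal (e i s) \<partial>M' i) \<le> 1" by simp
    qed
    finally show ?thesis .
  qed

  have GP_meas: "(\<lambda>(\<omega>, S). ennreal (exp (G (snd \<omega>) S))) \<in> borel_measurable (P \<Otimes>\<^sub>M SS)"
  proof -
    have eqs: "sets (P \<Otimes>\<^sub>M SS) = sets (M0 \<Otimes>\<^sub>M SS)" using P_sets by (intro sets_pair_measure_cong) auto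
    have ee: "(\<lambda>v. ennreal (exp v)) \<in> borel_measurable borel" by measurable
    have "(\<lambda>x. ennreal (exp (G (snd (fst x)) (snd x)))) \<in> borel_measurable (M0 \<Otimes>\<^sub>M SS)"
      using measurable_compose[OF G_meas ee] .
    then have "(\<lambda>x. ennreal (exp (G (snd (fst x)) (snd x)))) \<in> borel_measurable (P \<Otimes>\<^sub>M SS)"
      using eqs by (simp cong: measurable_cong_sets)
    then show ?thesis by (simp add: case_prod_beta')
  qed
  have W_meas: "W \<in> borel_measurable SS"
  proof -
    have "(\<lambda>(S, \<omega>). ennreal (exp (G (snd \<omega>) S))) \<in> borel_measurable (SS \<Otimes>\<^sub>M P)"
      using GP_meas by (subst measurable_pair_swap_iff) (simp add: case_prod_beta')
    then show ?thesis unfolding W_def[abs_def] by (rule P.borel_measurable_nn_integral)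
  qed
  have space_P: "snd \<omega> \<in> (\<Pi>\<^sub>E i\<in>{..<n}. space F)" if "\<omega> \<in> space P" for \<omega>
  proof -
    have "space M0 = space (prob_algebra F) \<times> (\<Pi>\<^sub>E i\<in>{..<n}. space F)"
      unfolding M0_def by (simp add: space_pair_measure space_PiM)
    then show ?thesis using that unfolding P_space by auto
  qed
  have W_int: "(\<integral>\<^sup>+S. W S \<partial>SS) \<le> 1"
  proof -
    have "(\<integral>\<^sup>+S. W S \<partial>SS) = (\<integral>\<^sup>+\<omega>. (\<integral>\<^sup>+S. ennreal (exp (G (snd \<omega>) S)) \<partial>SS) \<partial>P)"
      unfolding W_def by (rule PS.Fubini'[OF GP_meas])
    also have "\<dots> \<le> (\<integral>\<^sup>+\<omega>. 1 \<partial>P)"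
    proof (rule nn_integral_mono)
      fix \<omega> assume "\<omega> \<in> space P"
      then show "(\<integral>\<^sup>+S. ennreal (exp (G (snd \<omega>) S)) \<partial>SS) \<le> 1" by (rule stepA[OF space_P])
    qed
    also have "\<dots> = 1" by (simp add: P.emeasure_space_1)
    finally show ?thesis .
  qed
  define Bad where "Bad = {S \<in> space SS. 1 \<le> ennreal \<delta> * W S}"
  have Bad_sets: "Bad \<in> sets SS" unfolding Bad_def using W_meas by measurable
  have "emeasure SS Bad \<le> ennreal \<delta> * (\<integral>\<^sup>+S. W S * indicator (space SS) S \<partial>SS)"
    unfolding Bad_def using W_meas by (intro nn_integral_Markov_inequality) auto
  also have "(\<integral>\<^sup>+S. W S * indicator (space SS) S \<partial>SS) = (\<integral>\<^sup>+S. W S \<partial>SS)"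
    by (intro nn_integral_cong) simp
  also have "ennreal \<delta> * (\<integral>\<^sup>+S. W S \<partial>SS) \<le> ennreal \<delta> * 1"
    using W_int by (intro mult_left_mono) auto
  finally have Bad_le: "emeasure SS Bad \<le> ennreal \<delta>" by simp
  define A where "A = space SS - Bad"
  have A_sets: "A \<in> sets SS" unfolding A_def using Bad_sets by auto
  have A_meas: "measure SS A \<ge> 1 - \<delta>"
  proof -
    have "measure SS Bad \<le> \<delta>"
      unfolding measure_def using Bad_le delta_pos by (intro enn2real_leI) auto
    then show ?thesis unfolding A_def using SS.prob_compl[OF Bad_sets] by simp
  qed
  have main: "ereal (- (\<Sum>i<n. real (m i) *
                    ln (1 - risk (l i) (D i) (Qs i)
                        + risk (l i) (D i) (Qs i) * exp (- lam i / (real n * real (m i)))))) \<le>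
                ereal ((1 / real n) * (\<Sum>i<n. lam i * emp_risk (l i) (m i) (S i) (Qs i)))
                + KL (joint_post n HQ Qs F) P
                + ereal (ln (1 / \<delta>))"
    if S: "S \<in> A" and HQ: "HQ \<in> space (prob_algebra (prob_algebra F))"
      and Qs: "\<forall>i<n. Qs i \<in> space (prob_algebra F)" for S HQ Qs
  proof -
    have S_sp: "S \<in> space SS" and nb: "\<not> 1 \<le> ennreal \<delta> * W S"
      using S unfolding A_def Bad_def by auto
    have WK: "W S \<le> ennreal (1 / \<delta>)"
    proof (cases "W S" rule: ennreal_cases)
      case (real w)
      then have "ennreal (\<delta> * w) < 1" using nb delta_pos by (simp add: ennreal_mult not_le)
      then have "\<delta> * w < 1" by (simp only: ennreal_less_one_iff)
      then have "w \<le> 1 / \<delta>" using delta_pos by (simp add: field_simps)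
      then show ?thesis using real by (simp add: ennreal_leI)
    next
      case top
      then have False using nb delta_pos by (simp add: ennreal_mult_top)
      then show ?thesis ..
    qed
    have HQ': "prob_space HQ" "sets HQ = sets (prob_algebra F)" using HQ by (auto simp: space_prob_algebra)
    have Qs_prob: "prob_space (Qs i)" if "i < n" for i using Qs that by (auto simp: space_prob_algebra)
    have Qs_sets: "sets (Qs i) = sets F" if "i < n" for i using Qs that by (auto simp: space_prob_algebra)
    define Qm where "Qm = joint_post n HQ Qs F"
    have Qm_prob: "prob_space Qm" and Qm_sets: "sets Qm = sets M0"
      using joint_post_facts[OF HQ Qs] unfolding Qm_def M0_def by auto
    have Qm_eq: "Qm = HQ \<Otimes>\<^sub>M PiM {..<n} Qs" unfolding Qm_def joint_post_def ..
    define g where "g i f = Phi i (Rf i f) - c i * (\<Sum>j<m i. l i f (S i j))" for i f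
    have Sz: "S i j \<in> space Z" if "i < n" "j < m i" for i j
    proof -
      have "S i \<in> space (PiM {..<m i} (\<lambda>j. D i))" using S_sp that unfolding SS_def by (auto simp: space_PiM)
      then have "S i j \<in> space (D i)" using that by (auto simp: space_PiM)
      then show ?thesis using sets_eq_imp_space_eq[OF D_sets[OF that(1)]] by simp
    qed
    have PhiRf_meas: "(\<lambda>f. Phi i (Rf i f)) \<in> borel_measurable F" if "i < n" for i
      using Rf_meas[OF that] unfolding Phi_def by measurable
    have g_meas: "g i \<in> borel_measurable F" if "i < n" for i
    proof -
      have "(\<lambda>f. l i f (S i j)) \<in> borel_measurable F" if "j < m i" for j
        using lZ[OF \<open>i < n\<close> Sz[OF \<open>i < n\<close> that]] .
      then show ?thesis unfolding g_def[abs_def] using PhiRf_meas[OF that]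
        by (intro borel_measurable_diff borel_measurable_times borel_measurable_const borel_measurable_sum) auto
    qed
    have g_bound: "\<bar>g i f\<bar> \<le> 2 * (real (m i) * c i)" if "i < n" for i f
    proof -
      have "\<bar>g i f\<bar> \<le> \<bar>Phi i (Rf i f)\<bar> + \<bar>c i * (\<Sum>j<m i. l i f (S i j))\<bar>"
        unfolding g_def by (rule abs_triangle_ineq4)
      also have "\<dots> \<le> real (m i) * c i + real (m i) * c i"
        using Phi_bound[OF that, of "Rf i f"] Rf_range[OF that, of f] lsum_bound[OF that, of f "S i"]
        by (intro add_mono) auto
      finally show ?thesis by (simp add: mult.commute)
    qed
    have u_eq: "G (snd \<omega>) S = (\<Sum>i<n. g i (snd \<omega> i))" for \<omega> :: "'f measure \<times> (nat \<Rightarrow> 'f)" unfolding G_def g_def ..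
    have u_meas: "(\<lambda>\<omega>. G (snd \<omega>) S) \<in> borel_measurable P"
    proof -
      have "(\<lambda>\<omega>. (\<omega>, S)) \<in> M0 \<rightarrow>\<^sub>M M0 \<Otimes>\<^sub>M SS" using S_sp by (rule measurable_Pair2')
      from measurable_compose[OF this G_meas] have "(\<lambda>\<omega>. G (snd \<omega>) S) \<in> borel_measurable M0" by simp
      then show ?thesis using P_sets by (simp cong: measurable_cong_sets)
    qed
    have u_bound: "\<bar>G (snd \<omega>) S\<bar> \<le> Bd" if "\<omega> \<in> space P" for \<omega>
      using G_bound[OF space_P[OF that]] .
    show ?thesis
    proof (cases "KL Qm P = \<infinity>")
      case True then show ?thesis unfolding Qm_def[symmetric] by simp
    next
      case False
      then have ac: "sets Qm = sets P" "absolutely_continuous P Qm" "integrable Qm (entropy_density (exp 1) P Qm)"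
        and KLeq: "KL Qm P = ereal (KL_divergence (exp 1) P Qm)"
        unfolding KL_def by (auto split: if_splits)
      have dv: "(\<integral>\<omega>. G (snd \<omega>) S \<partial>Qm) \<le> KL_divergence (exp 1) P Qm + ln (1 / \<delta>)"
        using dv_bound[OF Qm_prob P_prob ac(1) ac(2) ac(3) u_meas u_bound WK[unfolded W_def]] delta_pos by simp
      have gQ: "g i \<in> borel_measurable (Qs i)" if "i < n" for i
        using g_meas[OF that] Qs_sets[OF that] by (simp cong: measurable_cong_sets)
      have int_eq: "(\<integral>\<omega>. G (snd \<omega>) S \<partial>Qm) = (\<Sum>i<n. \<integral>f. g i f \<partial>Qs i)"
      proof -
        have "(\<integral>\<omega>. G (snd \<omega>) S \<partial>Qm) = (\<Sum>i<n. \<integral>\<omega>. g i (snd \<omega> i) \<partial>Qm)"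
          unfolding u_eq Qm_eq
        proof (rule Bochner_Integration.integral_sum)
          fix i assume "i \<in> {..<n}"
          then show "integrable (HQ \<Otimes>\<^sub>M PiM {..<n} Qs) (\<lambda>\<omega>. g i (snd \<omega> i))"
            using marginal_integrable[where Qs=Qs and n=n and i=i and g="g i", OF HQ'(1) Qs_prob _ gQ g_bound] by auto
        qed
        also have "\<dots> = (\<Sum>i<n. \<integral>f. g i f \<partial>Qs i)"
          unfolding Qm_eq
          using marginal_integral[where Qs=Qs and n=n, OF HQ'(1) Qs_prob _ gQ g_bound] by (intro sum.cong refl) auto
        finally show ?thesis .
      qed
      have split: "(\<integral>f. g i f \<partial>Qs i) = (\<integral>f. Phi i (Rf i f) \<partial>Qs i) - c i * (\<Sum>j<m i. \<integral>f. l i f (S i j) \<partial>Qs i)"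
        if i: "i < n" for i
      proof -
        interpret Qi: prob_space "Qs i" by (rule Qs_prob[OF i])
        have int1: "integrable (Qs i) (\<lambda>f. Phi i (Rf i f))"
          using PhiRf_meas[OF i] Qs_sets[OF i] Phi_bound[OF i] Rf_range[OF i]
          by (intro Qi.integrable_const_bound[where B="real (m i) * c i"]) (auto cong: measurable_cong_sets)
        have int2: "integrable (Qs i) (\<lambda>f. l i f (S i j))" if "j < m i" for j
          using lZ[OF i Sz[OF i that]] Qs_sets[OF i] l_range[OF i]
          by (intro Qi.integrable_const_bound[where B=1]) (auto cong: measurable_cong_sets)
        have "(\<integral>f. g i f \<partial>Qs i) = (\<integral>f. Phi i (Rf i f) \<partial>Qs i) - (\<integral>f. c i * (\<Sum>j<m i. l i f (S i j)) \<partial>Qs i)"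
        proof -
          have int3: "integrable (Qs i) (\<lambda>f. c i * (\<Sum>j<m i. l i f (S i j)))"
            using int2 by (intro integrable_mult_right Bochner_Integration.integrable_sum) auto
          show ?thesis unfolding g_def by (rule Bochner_Integration.integral_diff[OF int1 int3])
        qed
        also have "(\<integral>f. c i * (\<Sum>j<m i. l i f (S i j)) \<partial>Qs i) = c i * (\<Sum>j<m i. \<integral>f. l i f (S i j) \<partial>Qs i)"
          using int2 by (simp add: Bochner_Integration.integral_sum)
        finally show ?thesis .
      qed
      have jen: "Phi i (risk (l i) (D i) (Qs i)) \<le> (\<integral>f. Phi i (Rf i f) \<partial>Qs i)" if i: "i < n" for i
      proof -
        have lQD: "(\<lambda>(f, z). l i f z) \<in> borel_measurable (Qs i \<Otimes>\<^sub>M D i)"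
        proof -
          have "sets (Qs i \<Otimes>\<^sub>M D i) = sets (F \<Otimes>\<^sub>M Z)"
            using Qs_sets[OF i] D_sets[OF i] by (intro sets_pair_measure_cong) auto
          then show ?thesis using l_meas[OF i] by (simp cong: measurable_cong_sets)
        qed
        have rk: "risk (l i) (D i) (Qs i) = (\<integral>f. Rf i f \<partial>Qs i)"
          unfolding Rf_def using risk_fubini[OF Qs_prob[OF i] D_prob[OF i] lQD] l_range[OF i] by simp
        have RfQ: "Rf i \<in> borel_measurable (Qs i)"
          using Rf_meas[OF i] Qs_sets[OF i] by (simp cong: measurable_cong_sets)
        have "exp (- c i) \<le> 1" using c_pos[OF i] by simp
        then show ?thesis unfolding rk Phi_def
          using jensen_phi[OF Qs_prob[OF i] RfQ Rf_range[OF i], of "exp (- c i)" "real (m i)"] by simp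
      qed
      have emp: "c i * (\<Sum>j<m i. \<integral>f. l i f (S i j) \<partial>Qs i) = lam i / real n * emp_risk (l i) (m i) (S i) (Qs i)"
        if i: "i < n" for i
        unfolding emp_risk_def rloss_def c_def using m_pos[OF i] n_pos by (simp add: field_simps)
      have real_ineq: "- (\<Sum>i<n. real (m i) *
                    ln (1 - risk (l i) (D i) (Qs i)
                        + risk (l i) (D i) (Qs i) * exp (- lam i / (real n * real (m i)))))
          \<le> (1 / real n) * (\<Sum>i<n. lam i * emp_risk (l i) (m i) (S i) (Qs i))
             + KL_divergence (exp 1) P Qm + ln (1 / \<delta>)"
      proof -
        have "- (\<Sum>i<n. real (m i) *
                    ln (1 - risk (l i) (D i) (Qs i)
                        + risk (l i) (D i) (Qs i) * exp (- lam i / (real n * real (m i)))))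
            = (\<Sum>i<n. Phi i (risk (l i) (D i) (Qs i)))"
          unfolding Phi_def c_def by (simp add: sum_negf)
        also have "\<dots> \<le> (\<Sum>i<n. \<integral>f. Phi i (Rf i f) \<partial>Qs i)"
          using jen by (intro sum_mono) auto
        also have "\<dots> = (\<Sum>i<n. (\<integral>f. g i f \<partial>Qs i) + lam i / real n * emp_risk (l i) (m i) (S i) (Qs i))"
          using split emp by (intro sum.cong) auto
        also have "\<dots> = (\<integral>\<omega>. G (snd \<omega>) S \<partial>Qm) + (1 / real n) * (\<Sum>i<n. lam i * emp_risk (l i) (m i) (S i) (Qs i))"
          by (simp add: sum.distrib int_eq sum_distrib_left)
        also have "\<dots> \<le> (1 / real n) * (\<Sum>i<n. lam i * emp_risk (l i) (m i) (S i) (Qs i))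
             + KL_divergence (exp 1) P Qm + ln (1 / \<delta>)"
          using dv by simp
        finally show ?thesis .
      qed
      then show ?thesis unfolding Qm_def[symmetric] KLeq by simp
    qed
  qed

  show ?thesis
    unfolding SS_def[symmetric] P_def[symmetric]
    using A_sets A_meas main by blast
qed

end
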